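(* Let $K$ be a positive semiring, let $k\ge1$ and $d\ge2$ be integers, and let $H=(V,E)$ be a $k$-uniform, $d$-regular hypergraph with distinct hyperedges $X_1,\ldots,X_m$, where the vertices are attributes whose domains all contain $\{0,1,\ldots,d-1\}$. For $i\in[m]$ let $R_i$ be the $K$-relation over $X_i$ such that $R_i(t)=1$ if $t$ takes values in $\{0,\ldots,d-1\}$ and $\sum_{C\in X_i}t(C)\equiv \delta_i \pmod d$, and $R_i(t)=0$ otherwise, where $\delta_i=0$ for $i\neq m$ and $\delta_m=1$. Then the collection $R_1,\ldots,R_m$ is pairwise consistent but not globally consistent.
   Context: A commutative semiring $(K,+,\cdot,0,1)$ with $0\neq 1$ is positive if $a+b=0$ implies $a=b=0$, and $ab=0$ implies $a=0$ or $b=0$. For a finite set of attributes $X$, $\mathrm{Tup}(X)$ is the set of maps assigning to each $A\in X$ an element of its domain; $t[Y]$ is restriction; $XY=X\cup Y$. A $K$-relation over $X$ is a map $R:\mathrm{Tup}(X)\to K$ with finite support $R'=\{t:R(t)\neq0\}$; its marginal on $Y\subseteq X$ is $R[Y](u)=\sum_{r\in R',r[Y]=u}R(r)$. $R\equiv S$ means $aR=bS$ for nonzero $a,b\in K$. $R$ over $X$ and $S$ over $Y$ are consistent if some $K$-relation $T$ over $XY$ has $R\equiv T[X]$, $S\equiv T[Y]$. A collection $R_1,\dots,R_m$ ($R_i$ over $X_i$) is pairwise consistent if every two members are consistent, and globally consistent if some $K$-relation $T$ over $X_1\cup\cdots\cup X_m$ satisfies $R_i\equiv T[X_i]$ for all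 $i$. A hypergraph is $k$-uniform if every hyperedge has exactly $k$ vertices, and $d$-regular if every vertex lies in exactly $d$ hyperedges. *)

theory Defs
  imports "HOL-Library.FuncSet"
begin

text \<open>Positive commutative semiring (0 \<noteq> 1 is part of comm_semiring_1).\<close>
definition positive_semiring :: "'k::comm_semiring_1 itself \<Rightarrow> bool" where
  "positive_semiring _ \<longleftrightarrow>
     (\<forall>a b::'k. a + b = 0 \<longrightarrow> a = 0 \<and> b = 0) \<and>
     (\<forall>a b::'k. a * b = 0 \<longrightarrow> a = 0 \<or> b = 0)"

definition Tup :: "('a \<Rightarrow> 'v set) \<Rightarrow> 'a set \<Rightarrow> ('a \<Rightarrow> 'v) set" where
  "Tup Dom X = PiE X Dom"

definition supp :: "(('a \<Rightarrow> 'v) \<Rightarrow> 'k::zero) \<Rightarrow> ('a \<Rightarrow> 'v) set" where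
  "supp R = {t. R t \<noteq> 0}"

definition is_krel :: "('a \<Rightarrow> 'v set) \<Rightarrow> 'a set \<Rightarrow> (('a \<Rightarrow> 'v) \<Rightarrow> 'k::zero) \<Rightarrow> bool" where
  "is_krel Dom X R \<longleftrightarrow> supp R \<subseteq> Tup Dom X \<and> finite (supp R)"

definition marginal :: "(('a \<Rightarrow> 'v) \<Rightarrow> 'k::comm_monoid_add) \<Rightarrow> 'a set \<Rightarrow> ('a \<Rightarrow> 'v) \<Rightarrow> 'k" where
  "marginal R Y u = (\<Sum>r\<in>{r\<in>supp R. restrict r Y = u}. R r)"

definition kequiv :: "(('a \<Rightarrow> 'v) \<Rightarrow> 'k::semiring_0) \<Rightarrow> (('a \<Rightarrow> 'v) \<Rightarrow> 'k) \<Rightarrow> bool" where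
  "kequiv R S \<longleftrightarrow> (\<exists>a b. a \<noteq> 0 \<and> b \<noteq> 0 \<and> (\<forall>t. a * R t = b * S t))"

definition consistent ::
  "('a \<Rightarrow> 'v set) \<Rightarrow> 'a set \<Rightarrow> (('a \<Rightarrow> 'v) \<Rightarrow> 'k::comm_semiring_1) \<Rightarrow> 'a set \<Rightarrow> (('a \<Rightarrow> 'v) \<Rightarrow> 'k) \<Rightarrow> bool" where
  "consistent Dom X R Y S \<longleftrightarrow>
     (\<exists>T. is_krel Dom (X \<union> Y) T \<and> kequiv R (marginal T X) \<and> kequiv S (marginal T Y))"

definition pairwise_consistent ::
  "('a \<Rightarrow> 'v set) \<Rightarrow> 'i set \<Rightarrow> ('i \<Rightarrow> 'a set) \<Rightarrow> ('i \<Rightarrow> ('a \<Rightarrow> 'v) \<Rightarrow> 'k::comm_semiring_1) \<Rightarrow> bool" where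
  "pairwise_consistent Dom I X R \<longleftrightarrow>
     (\<forall>i\<in>I. \<forall>j\<in>I. i \<noteq> j \<longrightarrow> consistent Dom (X i) (R i) (X j) (R j))"

definition globally_consistent ::
  "('a \<Rightarrow> 'v set) \<Rightarrow> 'i set \<Rightarrow> ('i \<Rightarrow> 'a set) \<Rightarrow> ('i \<Rightarrow> ('a \<Rightarrow> 'v) \<Rightarrow> 'k::comm_semiring_1) \<Rightarrow> bool" where
  "globally_consistent Dom I X R \<longleftrightarrow>
     (\<exists>T. is_krel Dom (\<Union>i\<in>I. X i) T \<and> (\<forall>i\<in>I. kequiv (R i) (marginal T (X i))))"

text \<open>The values 0..d-1 are represented in the value type via an injection enc.
  mod_rel Dom enc d X \<delta> t = 1 iff t is a tuple over X taking values in {0..d-1}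
  whose sum is congruent to \<delta> mod d, else 0.\<close>
definition mod_rel ::
  "('a \<Rightarrow> 'v set) \<Rightarrow> (nat \<Rightarrow> 'v) \<Rightarrow> nat \<Rightarrow> 'a set \<Rightarrow> nat \<Rightarrow> ('a \<Rightarrow> 'v) \<Rightarrow> 'k::comm_semiring_1" where
  "mod_rel Dom enc d X \<delta> t =
     (if t \<in> Tup Dom X \<and> (\<forall>C\<in>X. t C \<in> enc ` {0..<d}) \<and>
         (\<Sum>C\<in>X. inv_into {0..<d} enc (t C)) mod d = \<delta> mod d
      then 1 else 0)"

end

theory Submission
  imports Defs "HOL-Number_Theory.Cong"
begin

definition TTc :: "('a \<Rightarrow> 'v set) \<Rightarrow> (nat \<Rightarrow> 'v) \<Rightarrow> nat \<Rightarrow> 'a set \<Rightarrow> nat \<Rightarrow> 'a set \<Rightarrow> nat \<Rightarrow> ('a \<Rightarrow> 'v) \<Rightarrow> bool" where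
  "TTc Dom enc d Xi di Xj dj t \<longleftrightarrow> t \<in> PiE (Xi \<union> Xj) Dom \<and> (\<forall>C\<in>Xi \<union> Xj. t C \<in> enc ` {0..<d}) \<and>
     (\<Sum>C\<in>Xi. inv_into {0..<d} enc (t C)) mod d = di mod d \<and>
     (\<Sum>C\<in>Xj. inv_into {0..<d} enc (t C)) mod d = dj mod d"

definition TT :: "('a \<Rightarrow> 'v set) \<Rightarrow> (nat \<Rightarrow> 'v) \<Rightarrow> nat \<Rightarrow> 'a set \<Rightarrow> nat \<Rightarrow> 'a set \<Rightarrow> nat \<Rightarrow> ('a \<Rightarrow> 'v) \<Rightarrow> 'k::comm_semiring_1" where
  "TT Dom enc d Xi di Xj dj t = (if TTc Dom enc d Xi di Xj dj t then 1 else 0)"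

lemma TTc_sym: "TTc Dom enc d Xi di Xj dj = TTc Dom enc d Xj dj Xi di"
proof (rule ext)
  fix t
  show "TTc Dom enc d Xi di Xj dj t = TTc Dom enc d Xj dj Xi di t"
    unfolding TTc_def Un_commute[of Xi Xj] by blast
qed

lemma TT_sym: "TT Dom enc d Xi di Xj dj = TT Dom enc d Xj dj Xi di"
  unfolding TT_def TTc_sym[of Dom enc d Xi di Xj dj] by (rule refl)

lemma supp_TT: "supp (TT Dom enc d Xi di Xj dj :: _ \<Rightarrow> 'k::comm_semiring_1) = Collect (TTc Dom enc d Xi di Xj dj)"
  unfolding supp_def TT_def by auto

lemma pos_of_nat:
  assumes "positive_semiring TYPE('k::comm_semiring_1)" "n > 0"
  shows "(of_nat n :: 'k) \<noteq> 0"
  using assms(2)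
proof (induction n)
  case 0 then show ?case by simp
next
  case (Suc n)
  show ?case
  proof
    assume "(of_nat (Suc n) :: 'k) = 0"
    then have "1 + (of_nat n :: 'k) = 0" by simp
    then have "(1::'k) = 0" using assms(1) unfolding positive_semiring_def by blast
    then show False by simp
  qed
qed

lemma pos_sum_nz:
  assumes "positive_semiring TYPE('k::comm_semiring_1)" "finite A" "x \<in> A" "\<forall>y\<in>A. f y \<noteq> (0::'k)"
  shows "sum f A \<noteq> 0"
proof
  assume "sum f A = 0"
  then have "f x + sum f (A - {x}) = 0" using assms(2,3) by (simp add: sum.remove)
  then have "f x = 0" using assms(1) unfolding positive_semiring_def by blast
  then show False using assms(3,4) by blast
qed

lemma sum_split3:
  assumes "finite Xj" "p \<in> Xj" "p \<notin> Xi"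
  shows "sum f Xj = f p + sum f (Xj \<inter> Xi) + sum f (Xj - Xi - {p})"
proof -
  have e: "Xj = insert p ((Xj \<inter> Xi) \<union> (Xj - Xi - {p}))" using assms by auto
  have "sum f Xj = sum f (insert p ((Xj \<inter> Xi) \<union> (Xj - Xi - {p})))" using e by simp
  also have "\<dots> = f p + sum f ((Xj \<inter> Xi) \<union> (Xj - Xi - {p}))"
    using assms by (subst sum.insert) auto
  also have "sum f ((Xj \<inter> Xi) \<union> (Xj - Xi - {p})) = sum f (Xj \<inter> Xi) + sum f (Xj - Xi - {p})"
    using assms by (subst sum.union_disjoint) auto
  finally show ?thesis by (simp add: add.assoc)
qed

lemma enc1: "inj_on enc {0..<(d::nat)} \<Longrightarrow> x \<in> enc ` {0..<d} \<Longrightarrow> inv_into {0..<d} enc x < d"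
proof -
  assume "x \<in> enc ` {0..<d}"
  then have "inv_into {0..<d} enc x \<in> {0..<d}" by (rule inv_into_into)
  then show ?thesis by simp
qed
lemma enc2: "x \<in> enc ` {0..<(d::nat)} \<Longrightarrow> enc (inv_into {0..<d} enc x) = x"
  by (simp add: f_inv_into_f)
lemma enc3: "inj_on enc {0..<(d::nat)} \<Longrightarrow> n < d \<Longrightarrow> inv_into {0..<d} enc (enc n) = n"
proof -
  assume a: "inj_on enc {0..<d}" "n < d"
  then have "n \<in> {0..<d}" by simp
  then show ?thesis using inv_into_f_f[OF a(1)] by blast
qed

lemma finite_TTc:
  assumes "finite Xi" "finite Xj"
  shows "finite (Collect (TTc Dom enc d Xi di Xj dj))"
proof (rule finite_subset)
  show "Collect (TTc Dom enc d Xi di Xj dj) \<subseteq> PiE (Xi \<union> Xj) (\<lambda>_. enc ` {0..<d})"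
    unfolding TTc_def by (auto simp: PiE_iff extensional_def)
  show "finite (PiE (Xi \<union> Xj) (\<lambda>_. enc ` {0..<d}))" using assms by (intro finite_PiE) auto
qed

lemma card_ext_le:
  fixes Dom :: "'a \<Rightarrow> 'v set" and enc :: "nat \<Rightarrow> 'v"
  assumes fi: "finite Xi" "finite Xj" and p: "p \<in> Xj" "p \<notin> Xi"
    and d: "d \<ge> 2" and enc: "inj_on enc {0..<d}"
    and dom: "\<forall>A\<in>Xi \<union> Xj. enc ` {0..<d} \<subseteq> Dom A"
    and u': "u' \<in> PiE Xi Dom" "\<forall>C\<in>Xi. u' C \<in> enc ` {0..<d}"
      "(\<Sum>C\<in>Xi. inv_into {0..<d} enc (u' C)) mod d = di mod d"
  shows "card {r. TTc Dom enc d Xi di Xj dj r \<and> restrict r Xi = u}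
       \<le> card {r. TTc Dom enc d Xi di Xj dj r \<and> restrict r Xi = u'}"
proof -
  let ?v = "inv_into {0..<d} enc"
  let ?A = "{r. TTc Dom enc d Xi di Xj dj r \<and> restrict r Xi = u}"
  let ?B = "{r. TTc Dom enc d Xi di Xj dj r \<and> restrict r Xi = u'}"
  define z where "z = (\<Sum>C\<in>Xj \<inter> Xi. ?v (u C))"
  define z' where "z' = (\<Sum>C\<in>Xj \<inter> Xi. ?v (u' C))"
  define s where "s = d - z' mod d + z"
  define g where "g r = (\<lambda>C. if C \<in> Xi then u' C else r C)(p := enc ((?v (r p) + s) mod d))" for r
  have d0: "d > 0" using d by simp
  have finB: "finite ?B" by (rule finite_subset[OF _ finite_TTc[OF fi]]) auto
  have ru: "r C = u C" if "r \<in> ?A" "C \<in> Xi" for r C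
  proof -
    have "restrict r Xi C = u C" using that by simp
    then show ?thesis using that(2) by simp
  qed
  have inj: "inj_on g ?A"
  proof (rule inj_onI)
    fix r1 r2 assume r1: "r1 \<in> ?A" and r2: "r2 \<in> ?A" and eq: "g r1 = g r2"
    show "r1 = r2"
    proof
      fix C
      show "r1 C = r2 C"
      proof (cases "C \<in> Xi")
        case True then show ?thesis using ru[OF r1] ru[OF r2] by simp
      next
        case False
        show ?thesis
        proof (cases "C = p")
          case True
          have E1: "r1 p \<in> enc ` {0..<d}" "r2 p \<in> enc ` {0..<d}"
            using r1 r2 p unfolding TTc_def by auto
          have "enc ((?v (r1 p) + s) mod d) = enc ((?v (r2 p) + s) mod d)"
            using fun_cong[OF eq, of p] unfolding g_def by simp
          then have "(?v (r1 p) + s) mod d = (?v (r2 p) + s) mod d"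
            using enc d0 by (auto dest: inj_onD)
          then have "?v (r1 p) mod d = ?v (r2 p) mod d"
            using cong_add_rcancel_nat[of "?v (r1 p)" s "?v (r2 p)" d] unfolding cong_def by simp
          then have "?v (r1 p) = ?v (r2 p)" using enc1[OF enc E1(1)] enc1[OF enc E1(2)] by simp
          then have "enc (?v (r1 p)) = enc (?v (r2 p))" by simp
          then show ?thesis using enc2[OF E1(1)] enc2[OF E1(2)] True by simp
        next
          case False
          then show ?thesis using fun_cong[OF eq, of C] \<open>C \<notin> Xi\<close> unfolding g_def by simp
        qed
      qed
    qed
  qed
  have img: "g ` ?A \<subseteq> ?B"
  proof
    fix y assume "y \<in> g ` ?A"
    then obtain r where r: "r \<in> ?A" and y: "y = g r" by blast
    have T: "r \<in> PiE (Xi \<union> Xj) Dom" "\<forall>C\<in>Xi \<union> Xj. r C \<in> enc ` {0..<d}"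
      "(\<Sum>C\<in>Xj. ?v (r C)) mod d = dj mod d" using r unfolding TTc_def by auto
    have gp: "g r p = enc ((?v (r p) + s) mod d)" unfolding g_def by simp
    have gXi: "g r C = u' C" if "C \<in> Xi" for C using that p unfolding g_def by auto
    have gO: "g r C = r C" if "C \<notin> Xi" "C \<noteq> p" for C using that unfolding g_def by auto
    have valsE: "\<forall>C\<in>Xi \<union> Xj. g r C \<in> enc ` {0..<d}"
    proof
      fix C assume C: "C \<in> Xi \<union> Xj"
      show "g r C \<in> enc ` {0..<d}"
      proof (cases "C = p")
        case True then show ?thesis using gp d0 by simp
      next
        case False then show ?thesis using gXi gO u'(2) T(2) C by (cases "C \<in> Xi") auto
      qed
    qed
    have pie: "g r \<in> PiE (Xi \<union> Xj) Dom"
    proof -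
      have "\<forall>C\<in>Xi \<union> Xj. g r C \<in> Dom C" using valsE dom by blast
      moreover have "\<forall>C. C \<notin> Xi \<union> Xj \<longrightarrow> g r C = undefined"
      proof (intro allI impI)
        fix C assume C: "C \<notin> Xi \<union> Xj"
        then have "C \<noteq> p" using p by auto
        then have "g r C = r C" using gO C by simp
        then show "g r C = undefined" using T(1) C by (simp add: PiE_def extensional_def)
      qed
      ultimately show ?thesis by (simp add: PiE_iff extensional_def)
    qed
    have sXi: "(\<Sum>C\<in>Xi. ?v (g r C)) mod d = di mod d"
      using u'(3) gXi by simp
    have W: "(\<Sum>C\<in>Xj - Xi - {p}. ?v (g r C)) = (\<Sum>C\<in>Xj - Xi - {p}. ?v (r C))"
      using gO by (intro sum.cong) auto
    have Z: "(\<Sum>C\<in>Xj \<inter> Xi. ?v (g r C)) = z'" unfolding z'_def using gXi by simp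
    have Zr: "(\<Sum>C\<in>Xj \<inter> Xi. ?v (r C)) = z" unfolding z_def using ru[OF r] by simp
    define w where "w = (\<Sum>C\<in>Xj - Xi - {p}. ?v (r C))"
    define a where "a = ?v (r p)"
    have sr: "(a + z + w) mod d = dj mod d"
      using T(3) sum_split3[OF fi(2) p, of "\<lambda>C. ?v (r C)"] Zr unfolding a_def w_def by simp
    have sg: "(\<Sum>C\<in>Xj. ?v (g r C)) = (a + s) mod d + z' + w"
      using sum_split3[OF fi(2) p, of "\<lambda>C. ?v (g r C)"] W Z gp enc3[OF enc] d0
      unfolding a_def w_def by simp
    have m1: "((a + s) mod d + z' + w) mod d = (a + s + z' + w) mod d"
      by (metis mod_add_left_eq add.assoc)
    have zz: "d * (z' div d) + z' mod d = z'" by simp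
    have zl: "z' mod d < d" using d0 by simp
    have e2: "a + s + z' + w = (a + z + w) + d * (z' div d + 1)"
    proof -
      have "d * (z' div d + 1) = d * (z' div d) + d" by (simp add: algebra_simps)
      then show ?thesis unfolding s_def using zz zl by linarith
    qed
    have sXj: "(\<Sum>C\<in>Xj. ?v (g r C)) mod d = dj mod d"
    proof -
      have mm: "((a + z + w) + d * (z' div d + 1)) mod d = (a + z + w) mod d"
        by (rule mod_mult_self2)
      have "(\<Sum>C\<in>Xj. ?v (g r C)) mod d = (a + s + z' + w) mod d" using sg m1 by simp
      also have "\<dots> = ((a + z + w) + d * (z' div d + 1)) mod d" by (simp only: e2)
      also have "\<dots> = dj mod d" using mm sr by simp
      finally show ?thesis .
    qed
    have "restrict (g r) Xi = u'"
    proof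
      fix C show "restrict (g r) Xi C = u' C"
        using gXi u'(1) by (cases "C \<in> Xi") (auto simp: PiE_def extensional_def)
    qed
    then show "y \<in> ?B" using y pie valsE sXi sXj unfolding TTc_def by simp
  qed
  show ?thesis by (rule card_inj_on_le[OF inj img finB])
qed


lemma marg_TT:
  "marginal (TT Dom enc d Xi di Xj dj :: _ \<Rightarrow> 'k::comm_semiring_1) Y u
     = of_nat (card {r. TTc Dom enc d Xi di Xj dj r \<and> restrict r Y = u})"
proof -
  have "marginal (TT Dom enc d Xi di Xj dj :: _ \<Rightarrow> 'k) Y u
      = (\<Sum>r\<in>{r. TTc Dom enc d Xi di Xj dj r \<and> restrict r Y = u}. (1::'k))"
    unfolding marginal_def supp_TT by (intro sum.cong) (auto simp: TT_def)
  then show ?thesis by simp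
qed

lemma R_of_TTc:
  assumes "TTc Dom enc d Xi di Xj dj r"
  shows "mod_rel Dom enc d Xi di (restrict r Xi) = (1::'k::comm_semiring_1)"
proof -
  have a: "r \<in> PiE (Xi \<union> Xj) Dom" "\<forall>C\<in>Xi \<union> Xj. r C \<in> enc ` {0..<d}"
     "(\<Sum>C\<in>Xi. inv_into {0..<d} enc (r C)) mod d = di mod d"
    using assms unfolding TTc_def by auto
  have "restrict r Xi \<in> PiE Xi Dom" using a(1) by (auto simp: PiE_iff)
  moreover have "(\<Sum>C\<in>Xi. inv_into {0..<d} enc (restrict r Xi C)) = (\<Sum>C\<in>Xi. inv_into {0..<d} enc (r C))"
    by (intro sum.cong) auto
  ultimately show ?thesis using a unfolding mod_rel_def Tup_def by auto
qed

lemma mod_rel_nz: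
  assumes "mod_rel Dom enc d X di u \<noteq> (0::'k::comm_semiring_1)"
  shows "u \<in> PiE X Dom" "\<forall>C\<in>X. u C \<in> enc ` {0..<d}"
    "(\<Sum>C\<in>X. inv_into {0..<d} enc (u C)) mod d = di mod d"
    "mod_rel Dom enc d X di u = (1::'k)"
  using assms unfolding mod_rel_def Tup_def by (auto split: if_splits)

lemma kequiv_TT:
  fixes Dom :: "'a \<Rightarrow> 'v set" and enc :: "nat \<Rightarrow> 'v"
  assumes K: "positive_semiring TYPE('k::comm_semiring_1)"
    and fi: "finite Xi" "finite Xj" and p: "p \<in> Xj" "p \<notin> Xi" and q: "q \<in> Xi" "q \<notin> Xj"
    and d: "d \<ge> 2" and enc: "inj_on enc {0..<d}"
    and dom: "\<forall>A\<in>Xi \<union> Xj. enc ` {0..<d} \<subseteq> Dom A"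
    and dd: "di < d" "dj < d"
  shows "kequiv (mod_rel Dom enc d Xi di :: _ \<Rightarrow> 'k) (marginal (TT Dom enc d Xi di Xj dj) Xi)"
proof -
  let ?v = "inv_into {0..<d} enc"
  let ?E = "\<lambda>u. {r. TTc Dom enc d Xi di Xj dj r \<and> restrict r Xi = u}"
  define r0 where "r0 = (\<lambda>C. if C \<in> Xi \<union> Xj then enc (if C = q then di else if C = p then dj else 0) else undefined)"
  have d0: "d > 0" using d by simp
  have vr0: "?v (r0 C) = (if C = q then di else if C = p then dj else 0)" if "C \<in> Xi \<union> Xj" for C
    using that enc3[OF enc] dd d0 unfolding r0_def by auto
  have r0E: "r0 C \<in> enc ` {0..<d}" if "C \<in> Xi \<union> Xj" for C
    using that dd d0 unfolding r0_def by auto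
  have s1: "(\<Sum>C\<in>Xi. ?v (r0 C)) = di"
  proof -
    have "(\<Sum>C\<in>Xi. ?v (r0 C)) = (\<Sum>C\<in>Xi. if C = q then di else 0)"
      using vr0 p by (intro sum.cong) auto
    then show ?thesis using fi q by simp
  qed
  have s2: "(\<Sum>C\<in>Xj. ?v (r0 C)) = dj"
  proof -
    have "(\<Sum>C\<in>Xj. ?v (r0 C)) = (\<Sum>C\<in>Xj. if C = p then dj else 0)"
      using vr0 q by (intro sum.cong) auto
    then show ?thesis using fi p by simp
  qed
  have pie0: "r0 \<in> PiE (Xi \<union> Xj) Dom"
  proof -
    have "\<forall>C\<in>Xi \<union> Xj. r0 C \<in> Dom C" using r0E dom by blast
    moreover have "r0 \<in> extensional (Xi \<union> Xj)" by (simp add: r0_def extensional_def)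
    ultimately show ?thesis by (simp add: PiE_iff)
  qed
  have T0: "TTc Dom enc d Xi di Xj dj r0"
    unfolding TTc_def using pie0 r0E s1 s2 by auto
  define u0 where "u0 = restrict r0 Xi"
  define N where "N = card (?E u0)"
  have finE: "finite (?E u)" for u by (rule finite_subset[OF _ finite_TTc[OF fi]]) auto
  have "r0 \<in> ?E u0" using T0 u0_def by simp
  then have Npos: "N > 0" unfolding N_def using finE card_gt_0_iff by blast
  have R0: "mod_rel Dom enc d Xi di u0 = (1::'k)" unfolding u0_def by (rule R_of_TTc[OF T0])
  have cardE: "card (?E u) = N" if "mod_rel Dom enc d Xi di u \<noteq> (0::'k)" for u
  proof -
    note A = mod_rel_nz[OF that]
    have B: "mod_rel Dom enc d Xi di u0 \<noteq> (0::'k)" using R0 by simp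
    note B' = mod_rel_nz[OF B]
    have "card (?E u) \<le> card (?E u0)"
      by (rule card_ext_le[OF fi p d enc dom B'(1-3)])
    moreover have "card (?E u0) \<le> card (?E u)"
      by (rule card_ext_le[OF fi p d enc dom A(1-3)])
    ultimately show ?thesis unfolding N_def by simp
  qed
  have emptyE: "?E u = {}" if "mod_rel Dom enc d Xi di u = (0::'k)" for u
  proof (rule ccontr)
    assume "?E u \<noteq> {}"
    then obtain r where "TTc Dom enc d Xi di Xj dj r" "restrict r Xi = u" by blast
    then have "mod_rel Dom enc d Xi di u = (1::'k)" using R_of_TTc by metis
    then show False using that by simp
  qed
  have "\<forall>u. of_nat N * mod_rel Dom enc d Xi di u = (1::'k) * marginal (TT Dom enc d Xi di Xj dj) Xi u"
  proof
    fix u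
    show "of_nat N * mod_rel Dom enc d Xi di u = (1::'k) * marginal (TT Dom enc d Xi di Xj dj) Xi u"
    proof (cases "mod_rel Dom enc d Xi di u = (0::'k)")
      case True
      have "marginal (TT Dom enc d Xi di Xj dj :: _ \<Rightarrow> 'k) Xi u = of_nat (card (?E u))" by (rule marg_TT)
      also have "\<dots> = 0" using emptyE[OF True] by (simp only: card.empty of_nat_0)
      finally show ?thesis using True by simp
    next
      case False then show ?thesis using cardE[OF False] mod_rel_nz(4)[OF False] by (simp add: marg_TT)
    qed
  qed
  moreover have "(of_nat N :: 'k) \<noteq> 0" using pos_of_nat[OF K Npos] .
  ultimately show ?thesis unfolding kequiv_def
    by (intro exI[of _ "of_nat N"] exI[of _ 1]) simp
qed


lemma witness_rel:
  assumes fin: "finite X" and c0: "c0 \<in> X" and dl: "dl < d"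
    and dom: "\<forall>A\<in>X. enc ` {0..<d} \<subseteq> Dom A" and enc: "inj_on enc {0..<d}"
  shows "mod_rel Dom enc d X dl (\<lambda>C. if C \<in> X then enc (if C = c0 then dl else 0) else undefined) = (1::'k::comm_semiring_1)"
proof -
  define u where "u = (\<lambda>C. if C \<in> X then enc (if C = c0 then dl else 0) else undefined)"
  have d0: "d > 0" using dl by simp
  have uE: "u C \<in> enc ` {0..<d}" if "C \<in> X" for C using that dl d0 unfolding u_def by auto
  have pie: "u \<in> PiE X Dom"
  proof -
    have "\<forall>C\<in>X. u C \<in> Dom C" using uE dom by blast
    moreover have "u \<in> extensional X" by (simp add: u_def extensional_def)
    ultimately show ?thesis by (simp add: PiE_iff)
  qed
  have "(\<Sum>C\<in>X. inv_into {0..<d} enc (u C)) = (\<Sum>C\<in>X. if C = c0 then dl else 0)"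
    using enc3[OF enc] dl d0 by (intro sum.cong) (auto simp: u_def)
  also have "\<dots> = dl" using fin c0 by simp
  finally have "(\<Sum>C\<in>X. inv_into {0..<d} enc (u C)) = dl" .
  then show ?thesis using pie uE unfolding mod_rel_def Tup_def u_def[symmetric] by auto
qed

theorem mainTheorem15:
  fixes V :: "'a set" and X :: "nat \<Rightarrow> 'a set" and m k d :: nat
    and Dom :: "'a \<Rightarrow> 'v set" and enc :: "nat \<Rightarrow> 'v"
  assumes K: "positive_semiring TYPE('k::comm_semiring_1)"
    and k: "k \<ge> 1" and d: "d \<ge> 2" and m: "m \<ge> 1"
    and finV: "finite V"
    and edges: "\<forall>i\<in>{1..m}. X i \<subseteq> V"
    and distinct: "inj_on X {1..m}"
    and uniform: "\<forall>i\<in>{1..m}. card (X i) = k"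
    and regular: "\<forall>v\<in>V. card {i\<in>{1..m}. v \<in> X i} = d"
    and enc_inj: "inj_on enc {0..<d}"
    and doms: "\<forall>A\<in>V. enc ` {0..<d} \<subseteq> Dom A"
  shows "pairwise_consistent Dom {1..m} X
           (\<lambda>i. (mod_rel Dom enc d (X i) (if i = m then 1 else 0) :: ('a \<Rightarrow> 'v) \<Rightarrow> 'k))
       \<and> \<not> globally_consistent Dom {1..m} X
           (\<lambda>i. (mod_rel Dom enc d (X i) (if i = m then 1 else 0) :: ('a \<Rightarrow> 'v) \<Rightarrow> 'k))"
proof
  define dl :: "nat \<Rightarrow> nat" where "dl i = (if i = m then 1 else 0)" for i
  have dlt: "dl i < d" for i using d unfolding dl_def by auto
  have fin: "finite (X i)" if "i \<in> {1..m}" for i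
    using uniform that k card.infinite by force
  have dom: "\<forall>A\<in>X i. enc ` {0..<d} \<subseteq> Dom A" if "i \<in> {1..m}" for i
    using edges doms that by blast
  have diff: "\<exists>p. p \<in> X j \<and> p \<notin> X i" if "i \<in> {1..m}" "j \<in> {1..m}" "i \<noteq> j" for i j
  proof (rule ccontr)
    assume "\<not> ?thesis"
    then have "X j \<subseteq> X i" by blast
    then have "X j = X i" using card_subset_eq[OF fin[OF that(1)]] uniform that by auto
    then show False using inj_onD[OF distinct] that by metis
  qed
  show "pairwise_consistent Dom {1..m} X
           (\<lambda>i. (mod_rel Dom enc d (X i) (if i = m then 1 else 0) :: ('a \<Rightarrow> 'v) \<Rightarrow> 'k))"
    unfolding pairwise_consistent_def
  proof (intro ballI impI)
    fix i j assume i: "i \<in> {1..m}" and j: "j \<in> {1..m}" and ij: "i \<noteq> j"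
    obtain p where p: "p \<in> X j" "p \<notin> X i" using diff[OF i j ij] by blast
    obtain q where q: "q \<in> X i" "q \<notin> X j" using diff[OF j i] ij i j by metis
    have domij: "\<forall>A\<in>X i \<union> X j. enc ` {0..<d} \<subseteq> Dom A" using dom[OF i] dom[OF j] by blast
    have domji: "\<forall>A\<in>X j \<union> X i. enc ` {0..<d} \<subseteq> Dom A" using domij by blast
    let ?T = "TT Dom enc d (X i) (dl i) (X j) (dl j) :: _ \<Rightarrow> 'k"
    have isk: "is_krel Dom (X i \<union> X j) ?T"
      unfolding is_krel_def supp_TT Tup_def using finite_TTc[OF fin[OF i] fin[OF j]]
      by (auto simp: TTc_def)
    have e1: "kequiv (mod_rel Dom enc d (X i) (dl i) :: _ \<Rightarrow> 'k) (marginal ?T (X i))"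
      by (rule kequiv_TT[OF K fin[OF i] fin[OF j] p q d enc_inj domij dlt dlt])
    have e2: "kequiv (mod_rel Dom enc d (X j) (dl j) :: _ \<Rightarrow> 'k) (marginal ?T (X j))"
      unfolding TT_sym[of Dom enc d "X i"]
      by (rule kequiv_TT[OF K fin[OF j] fin[OF i] q p d enc_inj domji dlt dlt])
    show "consistent Dom (X i) (mod_rel Dom enc d (X i) (if i = m then 1 else 0) :: _ \<Rightarrow> 'k)
          (X j) (mod_rel Dom enc d (X j) (if j = m then 1 else 0))"
      unfolding consistent_def using isk e1 e2 unfolding dl_def by blast
  qed
  show "\<not> globally_consistent Dom {1..m} X
           (\<lambda>i. (mod_rel Dom enc d (X i) (if i = m then 1 else 0) :: ('a \<Rightarrow> 'v) \<Rightarrow> 'k))"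
  proof
    assume "globally_consistent Dom {1..m} X
           (\<lambda>i. (mod_rel Dom enc d (X i) (if i = m then 1 else 0) :: ('a \<Rightarrow> 'v) \<Rightarrow> 'k))"
    then obtain T :: "_ \<Rightarrow> 'k" where isk: "is_krel Dom (\<Union>i\<in>{1..m}. X i) T"
      and eq: "\<forall>i\<in>{1..m}. kequiv (mod_rel Dom enc d (X i) (dl i) :: _ \<Rightarrow> 'k) (marginal T (X i))"
      unfolding globally_consistent_def dl_def by blast
    have finT: "finite (supp T)" using isk unfolding is_krel_def by blast
    have nzd: "x * y \<noteq> 0" if "x \<noteq> 0" "y \<noteq> 0" for x y :: 'k
      using K that unfolding positive_semiring_def by blast
    have one: "1 \<in> {1..m}" using m by simp
    obtain c0 where c0: "c0 \<in> X 1" using uniform one k by fastforce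
    define u1 where "u1 = (\<lambda>C. if C \<in> X 1 then enc (if C = c0 then dl 1 else 0) else undefined)"
    have R1: "mod_rel Dom enc d (X 1) (dl 1) u1 = (1::'k)"
      unfolding u1_def by (rule witness_rel[OF fin[OF one] c0 dlt dom[OF one] enc_inj])
    obtain a b :: 'k where ab: "a \<noteq> 0" "b \<noteq> 0"
      "\<forall>t. a * mod_rel Dom enc d (X 1) (dl 1) t = b * marginal T (X 1) t"
      using eq one unfolding kequiv_def by blast
    have "a * mod_rel Dom enc d (X 1) (dl 1) u1 = b * marginal T (X 1) u1" using ab(3) by blast
    then have "b * marginal T (X 1) u1 \<noteq> 0" using ab(1) R1 by simp
    then have mnz: "marginal T (X 1) u1 \<noteq> 0" by auto
    have "{r \<in> supp T. restrict r (X 1) = u1} \<noteq> {}"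
    proof
      assume "{r \<in> supp T. restrict r (X 1) = u1} = {}"
      then have "marginal T (X 1) u1 = 0" unfolding marginal_def by (simp only: sum.empty)
      then show False using mnz by contradiction
    qed
    then obtain t where t: "t \<in> supp T" by blast
    have cond: "(\<Sum>C\<in>X i. inv_into {0..<d} enc (t C)) mod d = dl i mod d" if i: "i \<in> {1..m}" for i
    proof -
      obtain a b :: 'k where ab: "a \<noteq> 0" "b \<noteq> 0"
        "\<forall>t. a * mod_rel Dom enc d (X i) (dl i) t = b * marginal T (X i) t"
        using eq i unfolding kequiv_def by blast
      let ?S = "{r \<in> supp T. restrict r (X i) = restrict t (X i)}"
      have "marginal T (X i) (restrict t (X i)) = sum T ?S" unfolding marginal_def by simp
      moreover have "sum T ?S \<noteq> 0"
        by (rule pos_sum_nz[OF K]) (use finT t in \<open>auto simp: supp_def\<close>)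
      ultimately have "b * marginal T (X i) (restrict t (X i)) \<noteq> 0" using nzd ab by simp
      moreover have "a * mod_rel Dom enc d (X i) (dl i) (restrict t (X i)) = b * marginal T (X i) (restrict t (X i))"
        using ab(3) by blast
      ultimately have "mod_rel Dom enc d (X i) (dl i) (restrict t (X i)) \<noteq> (0::'k)" by auto
      note c = mod_rel_nz(3)[OF this]
      have "(\<Sum>C\<in>X i. inv_into {0..<d} enc (restrict t (X i) C)) = (\<Sum>C\<in>X i. inv_into {0..<d} enc (t C))"
        by (rule sum.cong) auto
      then show ?thesis using c by simp
    qed
    let ?f = "\<lambda>C. inv_into {0..<d} enc (t C)"
    have "(\<Sum>i\<in>{1..m}. \<Sum>C\<in>X i. ?f C) = (\<Sum>i\<in>{1..m}. \<Sum>C\<in>V. if C \<in> X i then ?f C else 0)"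
    proof (rule sum.cong[OF refl])
      fix i assume "i \<in> {1..m}"
      then have "V \<inter> X i = X i" using edges by blast
      then show "(\<Sum>C\<in>X i. ?f C) = (\<Sum>C\<in>V. if C \<in> X i then ?f C else 0)"
        using sum.inter_restrict[OF finV, of ?f "X i"] by simp
    qed
    also have "\<dots> = (\<Sum>C\<in>V. \<Sum>i\<in>{1..m}. if C \<in> X i then ?f C else 0)" by (rule sum.swap)
    also have "\<dots> = (\<Sum>C\<in>V. d * ?f C)"
    proof (rule sum.cong[OF refl])
      fix C assume C: "C \<in> V"
      have "(\<Sum>i\<in>{1..m}. if C \<in> X i then ?f C else 0) = (\<Sum>i\<in>{i\<in>{1..m}. C \<in> X i}. ?f C)"
        by (rule sum.inter_filter[symmetric]) simp
      also have "\<dots> = d * ?f C" using regular C by simp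
      finally show "(\<Sum>i\<in>{1..m}. if C \<in> X i then ?f C else 0) = d * ?f C" .
    qed
    also have "\<dots> = d * (\<Sum>C\<in>V. ?f C)" by (simp add: sum_distrib_left)
    finally have tot: "(\<Sum>i\<in>{1..m}. \<Sum>C\<in>X i. ?f C) = d * (\<Sum>C\<in>V. ?f C)" .
    have "(\<Sum>i\<in>{1..m}. \<Sum>C\<in>X i. ?f C) mod d = (\<Sum>i\<in>{1..m}. (\<Sum>C\<in>X i. ?f C) mod d) mod d"
      by (simp add: mod_sum_eq)
    also have "\<dots> = (\<Sum>i\<in>{1..m}. dl i mod d) mod d" using cond by simp
    also have "\<dots> = (\<Sum>i\<in>{1..m}. dl i) mod d" by (simp add: mod_sum_eq)
    also have "(\<Sum>i\<in>{1..m}. dl i) = 1" using m unfolding dl_def by simp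
    finally have "(\<Sum>i\<in>{1..m}. \<Sum>C\<in>X i. ?f C) mod d = 1" using d by simp
    then show False using tot by simp
  qed
qed

end
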